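(* For real $a,c,d$ and integer $k$, let \[ \begin{aligned} \lambda(k,a,c,d)={}&k^3\left(6a^4-6a^3+a^2+2ac+2d\right)\\ &+k^2\left(-384a^5+324a^4-42a^3-144a^2c-6ac-192ad-12d\right)\\ &+k\left(4608a^6-3072a^5+618a^4+2304a^3c-36a^3+144a^2c+4608a^2d-a^2+4ac+576ad+22d\right)\\ &+4608a^6-2688a^5-6144a^4c+300a^4-24576a^3d-4608a^2d-384ad-12d. \end{aligned} \] Let $a>\frac{22}{10}$, and let $c,d$ satisfy \[ \tfrac{1}{192}\left(-768a^3+768a^2-160a+7\right)\le c\le \tfrac{1}{512}\left(-1536a^3+1728a^2-424a+25\right), \] \[ \tfrac12\left(-6a^4+6a^3-a^2-2ac\right)\le d\le \tfrac{1}{2048}\left(768a^3-512a^2-512ac+104a+192c-7\right). \] Then there exists an integer $k\ge 4$ such that $\lambda(k,a,c,d)<0$. *)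

theory Defs
  imports Complex_Main
begin

definition lam :: "int \<Rightarrow> real \<Rightarrow> real \<Rightarrow> real \<Rightarrow> real" where
  "lam k a c d =
     (let x = real_of_int k in
      x^3 * (6*a^4 - 6*a^3 + a^2 + 2*a*c + 2*d)
    + x^2 * (-384*a^5 + 324*a^4 - 42*a^3 - 144*a^2*c - 6*a*c - 192*a*d - 12*d)
    + x * (4608*a^6 - 3072*a^5 + 618*a^4 + 2304*a^3*c - 36*a^3 + 144*a^2*c + 4608*a^2*d
           - a^2 + 4*a*c + 576*a*d + 22*d)
    + 4608*a^6 - 2688*a^5 - 6144*a^4*c + 300*a^4 - 24576*a^3*d - 4608*a^2*d - 384*a*d - 12*d)"

end

theory Submission
  imports Defs
begin

definition L :: "real \<Rightarrow> real \<Rightarrow> real \<Rightarrow> real \<Rightarrow> real" where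
  "L x a c d =
      x^3 * (6*a^4 - 6*a^3 + a^2 + 2*a*c + 2*d)
    + x^2 * (-384*a^5 + 324*a^4 - 42*a^3 - 144*a^2*c - 6*a*c - 192*a*d - 12*d)
    + x * (4608*a^6 - 3072*a^5 + 618*a^4 + 2304*a^3*c - 36*a^3 + 144*a^2*c + 4608*a^2*d
           - a^2 + 4*a*c + 576*a*d + 22*d)
    + 4608*a^6 - 2688*a^5 - 6144*a^4*c + 300*a^4 - 24576*a^3*d - 4608*a^2*d - 384*a*d - 12*d"

definition cl :: "real \<Rightarrow> real" where "cl a = (1/192) * (-768*a^3 + 768*a^2 - 160*a + 7)"
definition cu :: "real \<Rightarrow> real" where "cu a = (1/512) * (-1536*a^3 + 1728*a^2 - 424*a + 25)"
definition dl :: "real \<Rightarrow> real \<Rightarrow> real" where "dl a c = (1/2) * (-6*a^4 + 6*a^3 - a^2 - 2*a*c)"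
definition du :: "real \<Rightarrow> real \<Rightarrow> real" where "du a c = (1/2048) * (768*a^3 - 512*a^2 - 512*a*c + 104*a + 192*c - 7)"

lemma vert1:
  fixes b s :: real
  assumes hb: "0 \<le> b" and hs0: "0 \<le> s" and hs1: "s \<le> 1"
  shows "L (36*(11/5+b) - s) (11/5+b) (cl (11/5+b)) (dl (11/5+b) (cl (11/5+b))) < 0"
proof -
  have eq: "L (36*(11/5+b) - s) (11/5+b) (cl (11/5+b)) (dl (11/5+b) (cl (11/5+b))) = (-62978497857/250000) + (353631663/4000)*(s) + (-21786831/20000)*(s^2) + (-47133626577/50000)*(b) + (825708033/4000)*(b*s) + (-8012229/4000)*(b*s^2) + (-1355695733/1000)*(b^2) + (4808421/25)*(b^2*s) + (-137797/100)*(b^2*s^2) + (-49512511/50)*(b^3) + (447024/5)*(b^3*s) + (-2102/5)*(b^3*s^2) + (-1968636/5)*(b^4) + (20736)*(b^4*s) + (-48)*(b^4*s^2) + (-407712/5)*(b^5) + (1920)*(b^5*s) + (-6912)*(b^6)"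
    by (simp add: L_def cl_def cu_def dl_def du_def) algebra
  have m0_1: "s \<le> 1" using hb hs0 hs1 by (simp add: mult_left_le power_le_one)
  have m0_2: "0 \<le> s^2" using hb hs0 by simp
  have pb1: "0 \<le> b" using hb by simp
  have m1_1: "b*s \<le> b" using hb hs0 hs1 by (simp add: mult_left_le power_le_one)
  have m1_2: "0 \<le> b*s^2" using hb hs0 by simp
  have pb2: "0 \<le> b^2" using hb by simp
  have m2_1: "b^2*s \<le> b^2" using hb hs0 hs1 by (simp add: mult_left_le power_le_one)
  have m2_2: "0 \<le> b^2*s^2" using hb hs0 by simp
  have pb3: "0 \<le> b^3" using hb by simp
  have m3_1: "b^3*s \<le> b^3" using hb hs0 hs1 by (simp add: mult_left_le power_le_one)
  have m3_2: "0 \<le> b^3*s^2" using hb hs0 by simp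
  have pb4: "0 \<le> b^4" using hb by simp
  have m4_1: "b^4*s \<le> b^4" using hb hs0 hs1 by (simp add: mult_left_le power_le_one)
  have m4_2: "0 \<le> b^4*s^2" using hb hs0 by simp
  have pb5: "0 \<le> b^5" using hb by simp
  have m5_1: "b^5*s \<le> b^5" using hb hs0 hs1 by (simp add: mult_left_le power_le_one)
  have pb6: "0 \<le> b^6" using hb by simp
  show ?thesis unfolding eq using m0_1 m0_2 pb1 m1_1 m1_2 pb2 m2_1 m2_2 pb3 m3_1 m3_2 pb4 m4_1 m4_2 pb5 m5_1 pb6 by linarith
qed

lemma vert2:
  fixes b s :: real
  assumes hb: "0 \<le> b" and hs0: "0 \<le> s" and hs1: "s \<le> 1"
  shows "L (36*(11/5+b) - s) (11/5+b) (cu (11/5+b)) (dl (11/5+b) (cu (11/5+b))) < 0"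
proof -
  have eq: "L (36*(11/5+b) - s) (11/5+b) (cu (11/5+b)) (dl (11/5+b) (cu (11/5+b))) = (-9321514005177/10000000) + (-20356225857/4000000)*(s) + (630486153/800000)*(s^2) + (-6202191491649/2000000)*(b) + (-52254717147/800000)*(b*s) + (16312851/6400)*(b*s^2) + (-854293161501/200000)*(b^2) + (-542446617/4000)*(b^2*s) + (602727/200)*(b^2*s^2) + (-6327396693/2000)*(b^3) + (-6049851/50)*(b^3*s) + (16881/10)*(b^3*s^2) + (-33973968/25)*(b^4) + (-274836/5)*(b^4*s) + (456)*(b^4*s^2) + (-8420664/25)*(b^5) + (-62832/5)*(b^5*s) + (48)*(b^5*s^2) + (-220608/5)*(b^6) + (-1152)*(b^6*s) + (-2304)*(b^7)"
    by (simp add: L_def cl_def cu_def dl_def du_def) algebra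
  have m0_1: "0 \<le> s" using hb hs0 by simp
  have m0_2: "s^2 \<le> 1" using hb hs0 hs1 by (simp add: mult_left_le power_le_one)
  have pb1: "0 \<le> b" using hb by simp
  have m1_1: "0 \<le> b*s" using hb hs0 by simp
  have m1_2: "b*s^2 \<le> b" using hb hs0 hs1 by (simp add: mult_left_le power_le_one)
  have pb2: "0 \<le> b^2" using hb by simp
  have m2_1: "0 \<le> b^2*s" using hb hs0 by simp
  have m2_2: "b^2*s^2 \<le> b^2" using hb hs0 hs1 by (simp add: mult_left_le power_le_one)
  have pb3: "0 \<le> b^3" using hb by simp
  have m3_1: "0 \<le> b^3*s" using hb hs0 by simp
  have m3_2: "b^3*s^2 \<le> b^3" using hb hs0 hs1 by (simp add: mult_left_le power_le_one)
  have pb4: "0 \<le> b^4" using hb by simp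
  have m4_1: "0 \<le> b^4*s" using hb hs0 by simp
  have m4_2: "b^4*s^2 \<le> b^4" using hb hs0 hs1 by (simp add: mult_left_le power_le_one)
  have pb5: "0 \<le> b^5" using hb by simp
  have m5_1: "0 \<le> b^5*s" using hb hs0 by simp
  have m5_2: "b^5*s^2 \<le> b^5" using hb hs0 hs1 by (simp add: mult_left_le power_le_one)
  have pb6: "0 \<le> b^6" using hb by simp
  have m6_1: "0 \<le> b^6*s" using hb hs0 by simp
  have pb7: "0 \<le> b^7" using hb by simp
  show ?thesis unfolding eq using m0_1 m0_2 pb1 m1_1 m1_2 pb2 m2_1 m2_2 pb3 m3_1 m3_2 pb4 m4_1 m4_2 pb5 m5_1 m5_2 pb6 m6_1 pb7 by linarith
qed

lemma vert3:
  fixes b s :: real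
  assumes hb: "0 \<le> b" and hs0: "0 \<le> s" and hs1: "s \<le> 1"
  shows "L (36*(11/5+b) - s) (11/5+b) (cu (11/5+b)) (du (11/5+b) (cu (11/5+b))) < 0"
proof -
  have eq: "L (36*(11/5+b) - s) (11/5+b) (cu (11/5+b)) (du (11/5+b) (cu (11/5+b))) = (-185628853583667/64000000) + (12287980943271/128000000)*(s) + (17051408361/12800000)*(s^2) + (-136541763/5120000)*(s^3) + (-62017459393347/6400000)*(b) + (355441734741/1600000)*(b*s) + (1008804573/256000)*(b*s^2) + (-1681161/32000)*(b*s^3) + (-2191615962567/160000)*(b^2) + (13025930483/64000)*(b^2*s) + (7087173/1600)*(b^2*s^2) + (-61601/1600)*(b^2*s^3) + (-34031520597/3200)*(b^3) + (36614457/400)*(b^3*s) + (192327/80)*(b^3*s^2) + (-249/20)*(b^3*s^3) + (-98057121/20)*(b^4) + (393471/20)*(b^4*s) + (636)*(b^4*s^2) + (-3/2)*(b^4*s^3) + (-6715017/5)*(b^5) + (6828/5)*(b^5*s) + (66)*(b^5*s^2) + (-202464)*(b^6) + (-72)*(b^6*s) + (-12960)*(b^7)"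
    by (simp add: L_def cl_def cu_def dl_def du_def) algebra
  have m0_1: "s \<le> 1" using hb hs0 hs1 by (simp add: mult_left_le power_le_one)
  have m0_2: "s^2 \<le> 1" using hb hs0 hs1 by (simp add: mult_left_le power_le_one)
  have m0_3: "0 \<le> s^3" using hb hs0 by simp
  have pb1: "0 \<le> b" using hb by simp
  have m1_1: "b*s \<le> b" using hb hs0 hs1 by (simp add: mult_left_le power_le_one)
  have m1_2: "b*s^2 \<le> b" using hb hs0 hs1 by (simp add: mult_left_le power_le_one)
  have m1_3: "0 \<le> b*s^3" using hb hs0 by simp
  have pb2: "0 \<le> b^2" using hb by simp
  have m2_1: "b^2*s \<le> b^2" using hb hs0 hs1 by (simp add: mult_left_le power_le_one)
  have m2_2: "b^2*s^2 \<le> b^2" using hb hs0 hs1 by (simp add: mult_left_le power_le_one)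
  have m2_3: "0 \<le> b^2*s^3" using hb hs0 by simp
  have pb3: "0 \<le> b^3" using hb by simp
  have m3_1: "b^3*s \<le> b^3" using hb hs0 hs1 by (simp add: mult_left_le power_le_one)
  have m3_2: "b^3*s^2 \<le> b^3" using hb hs0 hs1 by (simp add: mult_left_le power_le_one)
  have m3_3: "0 \<le> b^3*s^3" using hb hs0 by simp
  have pb4: "0 \<le> b^4" using hb by simp
  have m4_1: "b^4*s \<le> b^4" using hb hs0 hs1 by (simp add: mult_left_le power_le_one)
  have m4_2: "b^4*s^2 \<le> b^4" using hb hs0 hs1 by (simp add: mult_left_le power_le_one)
  have m4_3: "0 \<le> b^4*s^3" using hb hs0 by simp
  have pb5: "0 \<le> b^5" using hb by simp
  have m5_1: "b^5*s \<le> b^5" using hb hs0 hs1 by (simp add: mult_left_le power_le_one)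
  have m5_2: "b^5*s^2 \<le> b^5" using hb hs0 hs1 by (simp add: mult_left_le power_le_one)
  have pb6: "0 \<le> b^6" using hb by simp
  have m6_1: "0 \<le> b^6*s" using hb hs0 by simp
  have pb7: "0 \<le> b^7" using hb by simp
  show ?thesis unfolding eq using m0_1 m0_2 m0_3 pb1 m1_1 m1_2 m1_3 pb2 m2_1 m2_2 m2_3 pb3 m3_1 m3_2 m3_3 pb4 m4_1 m4_2 m4_3 pb5 m5_1 m5_2 pb6 m6_1 pb7 by linarith
qed


lemma conv:
  fixes f :: "real \<Rightarrow> real"
  assumes "lo \<le> z" "z \<le> hi" "\<And>t. f ((1-t)*lo + t*hi) = (1-t)*f lo + t*f hi"
    "f lo < 0" "f hi < 0"
  shows "f z < 0"
proof (cases "lo = hi")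
  case True
  then have "z = lo" using assms(1,2) by simp
  then show ?thesis using assms(4) by simp
next
  case False
  then have hl: "lo < hi" using assms(1,2) by simp
  define t where "t = (z - lo) / (hi - lo)"
  have t0: "0 \<le> t" unfolding t_def using assms(1) hl by simp
  have t1: "t \<le> 1" unfolding t_def using assms(2) hl by simp
  have tt: "t*(hi-lo) = z - lo" unfolding t_def using hl by simp
  have "(1-t)*lo + t*hi = lo + t*(hi-lo)" by (simp add: algebra_simps)
  then have "(1-t)*lo + t*hi = z" using tt by simp
  then have fz: "f z = (1-t)*f lo + t*f hi" using assms(3)[of t] by simp
  have a1: "(1-t)*f lo \<le> 0" using t1 assms(4) by (simp add: mult_nonneg_nonpos)
  have a2: "t*f hi \<le> 0" using t0 assms(5) by (simp add: mult_nonneg_nonpos)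
  show ?thesis
  proof (cases "t = 0")
    case True then show ?thesis using fz assms(4) by simp
  next
    case False then have "t*f hi < 0" using t0 assms(5) by (simp add: mult_pos_neg)
    then show ?thesis using fz a1 by simp
  qed
qed

lemma vertx:
  fixes a x :: real
  assumes "a \<ge> 11/5" "36*a - 1 \<le> x" "x \<le> 36*a"
  shows "L x a (cl a) (dl a (cl a)) < 0" "L x a (cu a) (dl a (cu a)) < 0" "L x a (cu a) (du a (cu a)) < 0"
proof -
  define b where "b = a - 11/5"
  define s where "s = 36*a - x"
  have hb: "0 \<le> b" "0 \<le> s" "s \<le> 1" using assms unfolding b_def s_def by simp_all
  have ea: "a = 11/5 + b" and ex: "x = 36*(11/5+b) - s" unfolding b_def s_def by simp_all
  show "L x a (cl a) (dl a (cl a)) < 0" using vert1[OF hb] unfolding ea ex .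
  show "L x a (cu a) (dl a (cu a)) < 0" using vert2[OF hb] unfolding ea ex .
  show "L x a (cu a) (du a (cu a)) < 0" using vert3[OF hb] unfolding ea ex .
qed

theorem lemma7p5:
  fixes a c d :: real
  assumes "a > 22/10"
    and "(1/192) * (-768*a^3 + 768*a^2 - 160*a + 7) \<le> c"
    and "c \<le> (1/512) * (-1536*a^3 + 1728*a^2 - 424*a + 25)"
    and "(1/2) * (-6*a^4 + 6*a^3 - a^2 - 2*a*c) \<le> d"
    and "d \<le> (1/2048) * (768*a^3 - 512*a^2 - 512*a*c + 104*a + 192*c - 7)"
  shows "\<exists>k::int. k \<ge> 4 \<and> lam k a c d < 0"
proof -
  define k where "k = \<lfloor>36*a\<rfloor>"
  define x where "x = real_of_int k"
  have x1: "x \<le> 36*a" unfolding x_def k_def by simp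
  have x2: "36*a - 1 \<le> x" unfolding x_def k_def by linarith
  have k4: "k \<ge> 4"
  proof -
    have "real_of_int k > 4 - 1" using x2 assms(1) unfolding x_def by simp
    then show ?thesis by simp
  qed
  have ha: "a \<ge> 11/5" using assms(1) by simp
  note V = vertx[OF ha x2 x1]
  have hc1: "cl a \<le> c" using assms(2) unfolding cl_def .
  have hc2: "c \<le> cu a" using assms(3) unfolding cu_def .
  have hd1: "dl a c \<le> d" using assms(4) unfolding dl_def .
  have hd2: "d \<le> du a c" using assms(5) unfolding du_def .
  have same: "du a (cl a) = dl a (cl a)" by (simp add: du_def dl_def cl_def) algebra
  have g1: "L x a c (dl a c) < 0"
    by (rule conv[where f = "\<lambda>c'. L x a c' (dl a c')", OF hc1 hc2])
       (simp add: L_def dl_def, algebra, use V in simp_all)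
  have g2: "L x a c (du a c) < 0"
    by (rule conv[where f = "\<lambda>c'. L x a c' (du a c')", OF hc1 hc2])
       (simp add: L_def du_def, algebra, use V same in simp_all)
  have "L x a c d < 0"
    by (rule conv[where f = "\<lambda>d'. L x a c d'", OF hd1 hd2])
       (simp add: L_def, algebra, use g1 g2 in simp_all)
  moreover have "lam k a c d = L x a c d" unfolding lam_def L_def x_def Let_def by simp
  ultimately show ?thesis using k4 by auto
qed

end
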